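(* Let $R$ be an associative ring with identity, and let $a,b,c,d\in R$ satisfy $bdb=bac$ and $dbd=acd$. If $ac\in R^{qnil}$, then $bd\in R^{qnil}$.
   Context: For $x\in R$, $\mathrm{comm}(x)=\{y\in R : xy=yx\}$. $R^{inv}$ denotes the set of units of $R$. $R^{qnil}=\{x\in R : 1+xy\in R^{inv}\text{ for every } y\in \mathrm{comm}(x)\}$ (the quasinilpotent elements). *)

theory Defs
  imports Main
begin

definition comm :: "'a::ring_1 \<Rightarrow> 'a set" where
  "comm x = {y. x * y = y * x}"

definition Rinv :: "'a::ring_1 set" where
  "Rinv = {x. \<exists>y. x * y = 1 \<and> y * x = 1}"

definition Rqnil :: "'a::ring_1 set" where
  "Rqnil = {x. \<forall>y\<in>comm x. 1 + x * y \<in> Rinv}"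

end

theory Submission
  imports Defs
begin

lemma jac:
  fixes p q :: "'a::ring_1"
  assumes "1 + p * q \<in> Rinv"
  shows "1 + q * p \<in> Rinv"
proof -
  obtain u where u1: "(1 + p*q) * u = 1" and u2: "u * (1 + p*q) = 1"
    using assms unfolding Rinv_def by blast
  have e1: "u + p*q*u = 1" using u1 by (simp add: algebra_simps)
  have e2: "u + u*p*q = 1" using u2 by (simp add: algebra_simps mult.assoc)
  have "(1 + q*p) * (1 - q*u*p) = 1 + q*p - q*(u + p*q*u)*p"
    by (simp add: algebra_simps mult.assoc)
  also have "\<dots> = 1" using e1 by simp
  finally have a: "(1 + q*p) * (1 - q*u*p) = 1" .
  have "(1 - q*u*p) * (1 + q*p) = 1 + q*p - q*(u + u*p*q)*p"
    by (simp add: algebra_simps mult.assoc)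
  also have "\<dots> = 1" using e2 by simp
  finally have b: "(1 - q*u*p) * (1 + q*p) = 1" .
  show ?thesis unfolding Rinv_def using a b by blast
qed

lemma comm_fac:
  fixes x z :: "'a::ring_1"
  assumes "x * z \<in> Rinv" and c: "x * z = z * x"
  shows "x \<in> Rinv"
proof -
  obtain v where v1: "x*z*v = 1" and v2: "v*(x*z) = 1"
    using assms unfolding Rinv_def by blast
  have r: "x * (z*v) = 1" using v1 by (simp add: mult.assoc)
  have l: "(v*z) * x = 1" using v2 c by (simp add: mult.assoc)
  have "v*z = (v*z) * (x*(z*v))" using r by simp
  also have "\<dots> = ((v*z)*x)*(z*v)" by (simp add: mult.assoc)
  also have "\<dots> = z*v" using l by simp
  finally have "v*z = z*v" .
  then show ?thesis unfolding Rinv_def using r l by auto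
qed

theorem lemma2p1:
  fixes a b c d :: "'a::ring_1"
  assumes "b * d * b = b * a * c"
    and "d * b * d = a * c * d"
    and "a * c \<in> Rqnil"
  shows "b * d \<in> Rqnil"
  unfolding Rqnil_def
proof (intro CollectI ballI)
  fix y assume "y \<in> comm (b*d)"
  then have yc: "b*d*y = y*(b*d)" unfolding comm_def by simp
  have y2: "b*d*(y*y) = (y*y)*(b*d)"
    by (metis yc mult.assoc)
  define w where "w = d*(y*y)*b"
  have "a*c*w = d*b*d*(y*y)*b"
    using assms(2) unfolding w_def by (metis mult.assoc)
  also have "\<dots> = d*((y*y)*(b*d))*b" using y2 by (metis mult.assoc)
  also have "\<dots> = d*(y*y)*(b*d*b)" by (simp add: mult.assoc)
  also have "\<dots> = w*(a*c)" using assms(1) unfolding w_def by (simp add: mult.assoc)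
  finally have wc: "a*c*w = w*(a*c)" .
  have "- w \<in> comm (a*c)" unfolding comm_def using wc by simp
  then have "1 + a*c*(-w) \<in> Rinv" using assms(3) unfolding Rqnil_def by blast
  moreover have "a*c*(-w) = d * (- (b*d*(y*y)*b))"
    using assms(2) unfolding w_def by (simp add: mult.assoc[symmetric])
  ultimately have "1 + d * (- (b*d*(y*y)*b)) \<in> Rinv" by simp
  then have "1 + (- (b*d*(y*y)*b)) * d \<in> Rinv" by (rule jac)
  moreover have "1 + (- (b*d*(y*y)*b)) * d = (1 + b*d*y) * (1 - b*d*y)"
  proof -
    have "b*d*y*(b*d*y) = b*d*(y*y)*b*d" by (metis yc mult.assoc)
    then show ?thesis by (simp add: algebra_simps)
  qed
  ultimately have "(1 + b*d*y) * (1 - b*d*y) \<in> Rinv" by simp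
  moreover have "(1 + b*d*y) * (1 - b*d*y) = (1 - b*d*y) * (1 + b*d*y)"
    by (simp add: algebra_simps)
  ultimately show "1 + b*d*y \<in> Rinv" by (rule comm_fac)
qed

end
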